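(* Let $X$ be a Tychonoff space and $\mathcal{H}$ a subspace with $\mathcal{F}_2(X)\subset\mathcal{H}\subset\mathcal{K}(X)$. If $\mathcal{H}$ is an $F'$-space, then $X$ is a $P$-space.
   Context: $\mathcal{K}(X)$ is the set of nonempty compact subsets of $X$ with the Vietoris topology (generated by $U^+=\{A: A\subset U\}$ and $U^-=\{A: A\cap U\neq\emptyset\}$ for $U$ open in $X$), and $\mathcal{F}_2(X)$ its subspace of nonempty subsets with at most $2$ points. A $P$-space is a space in which every point lies in the interior of every $G_\delta$ set containing it. A cozero set is the complement of a zero set $f^{-1}(0)$ of a continuous real-valued function; an $F'$-space is a Tychonoff space in which any two disjoint cozero sets have disjoint closures. *)

theory Defs
  imports "HOL-Analysis.Analysis"
begin

definition tychonoff_space :: "'a topology \<Rightarrow> bool" where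
  "tychonoff_space X \<longleftrightarrow> completely_regular_space X \<and> t1_space X"

definition p_space :: "'a topology \<Rightarrow> bool" where
  "p_space X \<longleftrightarrow> (\<forall>G x. gdelta_in X G \<and> x \<in> G \<longrightarrow> x \<in> X interior_of G)"

definition cozero_set_in :: "'a topology \<Rightarrow> 'a set \<Rightarrow> bool" where
  "cozero_set_in X C \<longleftrightarrow>
     (\<exists>f. continuous_map X euclideanreal f \<and> C = topspace X - {x \<in> topspace X. f x = 0})"

definition F'_space :: "'a topology \<Rightarrow> bool" where
  "F'_space X \<longleftrightarrow> tychonoff_space X \<and>
     (\<forall>C D. cozero_set_in X C \<and> cozero_set_in X D \<and> C \<inter> D = {}
        \<longrightarrow> (X closure_of C) \<inter> (X closure_of D) = {})"

definition hyp_K :: "'a topology \<Rightarrow> 'a set set" where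
  "hyp_K X = {A. compactin X A \<and> A \<noteq> {}}"

definition hyp_F2 :: "'a topology \<Rightarrow> 'a set set" where
  "hyp_F2 X = {A. A \<subseteq> topspace X \<and> A \<noteq> {} \<and> finite A \<and> card A \<le> 2}"

definition vietoris :: "'a topology \<Rightarrow> 'a set topology" where
  "vietoris X = subtopology
     (topology_generated_by
        ({{A. A \<subseteq> U} | U. openin X U} \<union> {{A. A \<inter> U \<noteq> {}} | U. openin X U}))
     (hyp_K X)"

end

theory Submission imports Defs begin

definition vsub :: "'a topology \<Rightarrow> 'a set set set" where
  "vsub X = ({{A. A \<subseteq> U} | U. openin X U} \<union> {{A. A \<inter> U \<noteq> {}} | U. openin X U})"

lemma vietoris_H:
  assumes "H \<subseteq> hyp_K X"
  shows "subtopology (vietoris X) H = subtopology (topology_generated_by (vsub X)) H"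
  using assms unfolding vietoris_def vsub_def
  by (simp add: subtopology_subtopology Int_absorb1)

lemma H_sub_vsub:
  assumes "H \<subseteq> hyp_K X"
  shows "H \<subseteq> \<Union>(vsub X)"
  proof
    fix A assume "A \<in> H"
    then have "A \<subseteq> topspace X" using assms compactin_subset_topspace by (auto simp: hyp_K_def)
    moreover have "{B. B \<subseteq> topspace X} \<in> vsub X" unfolding vsub_def by auto
    ultimately show "A \<in> \<Union>(vsub X)" by blast
  qed

lemma topspace_vietoris_H:
  assumes "H \<subseteq> hyp_K X"
  shows "topspace (subtopology (vietoris X) H) = H"
proof -
  have "topspace (subtopology (vietoris X) H) = \<Union>(vsub X) \<inter> H"
    unfolding vietoris_H[OF assms] topspace_subtopology topology_generated_by_topspace ..
  then show ?thesis using H_sub_vsub[OF assms] by blast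
qed

lemma open_plus:
  assumes "H \<subseteq> hyp_K X" "openin X U"
  shows "openin (subtopology (vietoris X) H) {A\<in>H. A \<subseteq> U}"
proof -
  have "openin (topology_generated_by (vsub X)) {A. A \<subseteq> U}"
    by (rule topology_generated_by_Basis) (use assms in \<open>auto simp: vsub_def\<close>)
  then show ?thesis unfolding vietoris_H[OF assms(1)] openin_subtopology by blast
qed

lemma open_minus:
  assumes "H \<subseteq> hyp_K X" "openin X U"
  shows "openin (subtopology (vietoris X) H) {A\<in>H. A \<inter> U \<noteq> {}}"
proof -
  have "openin (topology_generated_by (vsub X)) {A. A \<inter> U \<noteq> {}}"
    by (rule topology_generated_by_Basis) (use assms in \<open>auto simp: vsub_def\<close>)
  then show ?thesis unfolding vietoris_H[OF assms(1)] openin_subtopology by blast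
qed

lemma gen_preimage:
  assumes "generate_topology_on S V" "\<And>s. s \<in> S \<Longrightarrow> openin Y {y\<in>topspace Y. f y \<in> s}"
  shows "openin Y {y\<in>topspace Y. f y \<in> V}"
  using assms(1)
proof induction
  case Empty then show ?case by simp
next
  case (Int a b)
  have "{y\<in>topspace Y. f y \<in> a \<inter> b} = {y\<in>topspace Y. f y \<in> a} \<inter> {y\<in>topspace Y. f y \<in> b}" by auto
  then show ?case using Int by auto
next
  case (UN K)
  have "{y\<in>topspace Y. f y \<in> \<Union>K} = \<Union>((\<lambda>k. {y\<in>topspace Y. f y \<in> k}) ` K)" by auto
  then show ?case using UN by auto
next
  case (Basis s) then show ?case using assms(2) by auto
qed

lemma cont_into_vietoris:
  assumes "H \<subseteq> hyp_K X" "\<And>y. y \<in> topspace Y \<Longrightarrow> f y \<in> H"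
    and "\<And>U. openin X U \<Longrightarrow> openin Y {y\<in>topspace Y. f y \<subseteq> U}"
    and "\<And>U. openin X U \<Longrightarrow> openin Y {y\<in>topspace Y. f y \<inter> U \<noteq> {}}"
  shows "continuous_map Y (subtopology (vietoris X) H) f"
  unfolding vietoris_H[OF assms(1)] continuous_map_in_subtopology
proof
  have sub: "H \<subseteq> \<Union>(vsub X)" by (rule H_sub_vsub[OF assms(1)])
  show "continuous_map Y (topology_generated_by (vsub X)) f"
    unfolding continuous_map_def
  proof (intro conjI allI impI)
    show "f \<in> topspace Y \<rightarrow> topspace (topology_generated_by (vsub X))" using assms(2) sub by auto
    fix V assume "openin (topology_generated_by (vsub X)) V"
    then have "generate_topology_on (vsub X) V" by (simp add: openin_topology_generated_by_iff)
    then show "openin Y {y\<in>topspace Y. f y \<in> V}"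
    proof (rule gen_preimage)
      fix s assume "s \<in> vsub X"
      then show "openin Y {y\<in>topspace Y. f y \<in> s}" unfolding vsub_def using assms(3,4) by auto
    qed
  qed
  show "f \<in> topspace Y \<rightarrow> H" using assms(2) by auto
qed

lemma sup_attained:
  assumes "compactin X A" "A \<noteq> {}" "continuous_map X euclideanreal g"
  shows "\<exists>z\<in>A. Sup (g ` A) = g z \<and> (\<forall>x\<in>A. g x \<le> g z)"
proof -
  have "compact (g ` A)" using image_compactin[OF assms(1,3)] by simp
  then obtain s where "s \<in> g ` A" "\<forall>t\<in>g ` A. t \<le> s" using compact_attains_sup assms(2) by blast
  then show ?thesis by (metis cSup_eq_maximum image_iff)
qed

lemma inf_attained:
  assumes "compactin X A" "A \<noteq> {}" "continuous_map X euclideanreal g"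
  shows "\<exists>z\<in>A. Inf (g ` A) = g z \<and> (\<forall>x\<in>A. g z \<le> g x)"
proof -
  have "compact (g ` A)" using image_compactin[OF assms(1,3)] by simp
  then obtain s where "s \<in> g ` A" "\<forall>t\<in>g ` A. s \<le> t" using compact_attains_inf assms(2) by blast
  then show ?thesis by (metis cInf_eq_minimum image_iff)
qed

lemma cont_sup:
  assumes "H \<subseteq> hyp_K X" "continuous_map X euclideanreal g"
  shows "continuous_map (subtopology (vietoris X) H) euclideanreal (\<lambda>A. Sup (g ` A))"
  unfolding continuous_map_upper_lower_semicontinuous_lt topspace_vietoris_H[OF assms(1)]
proof (intro allI conjI)
  fix a :: real
  have o1: "openin X {x \<in> topspace X. g x > a}" "openin X {x \<in> topspace X. g x < a}"
    using assms(2) unfolding continuous_map_upper_lower_semicontinuous_lt by auto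
  have "{A\<in>H. a < Sup (g ` A)} = {A\<in>H. A \<inter> {x \<in> topspace X. g x > a} \<noteq> {}}"
  proof (intro Collect_cong conj_cong refl)
    fix A assume "A \<in> H"
    then have A: "compactin X A" "A \<noteq> {}" using assms(1) by (auto simp: hyp_K_def)
    then have "A \<subseteq> topspace X" by (simp add: compactin_subset_topspace)
    obtain z where "z\<in>A" "Sup (g ` A) = g z" "\<forall>x\<in>A. g x \<le> g z" using sup_attained[OF A assms(2)] by blast
    show "a < Sup (g ` A) \<longleftrightarrow> A \<inter> {x \<in> topspace X. g x > a} \<noteq> {}"
    proof
      assume "a < Sup (g ` A)" then have "a < g z" using \<open>Sup (g ` A) = g z\<close> by simp
      then have "z \<in> A \<inter> {x \<in> topspace X. g x > a}" using \<open>z\<in>A\<close> \<open>A \<subseteq> topspace X\<close> by auto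
      then show "A \<inter> {x \<in> topspace X. g x > a} \<noteq> {}" by blast
    next
      assume "A \<inter> {x \<in> topspace X. g x > a} \<noteq> {}"
      then obtain x where "x \<in> A" "g x > a" by blast
      moreover have "g x \<le> g z" using \<open>\<forall>x\<in>A. g x \<le> g z\<close> \<open>x \<in> A\<close> by blast
      ultimately show "a < Sup (g ` A)" using \<open>Sup (g ` A) = g z\<close> by linarith
    qed
  qed
  then show "openin (subtopology (vietoris X) H) {A\<in>H. a < Sup (g ` A)}"
    using open_minus[OF assms(1) o1(1)] by simp
  have "{A\<in>H. Sup (g ` A) < a} = {A\<in>H. A \<subseteq> {x \<in> topspace X. g x < a}}"
  proof (intro Collect_cong conj_cong refl)
    fix A assume "A \<in> H"
    then have A: "compactin X A" "A \<noteq> {}" using assms(1) by (auto simp: hyp_K_def)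
    then have "A \<subseteq> topspace X" by (simp add: compactin_subset_topspace)
    obtain z where "z\<in>A" "Sup (g ` A) = g z" "\<forall>x\<in>A. g x \<le> g z" using sup_attained[OF A assms(2)] by blast
    show "Sup (g ` A) < a \<longleftrightarrow> A \<subseteq> {x \<in> topspace X. g x < a}"
    proof
      assume "Sup (g ` A) < a" then have "g z < a" using \<open>Sup (g ` A) = g z\<close> by simp
      show "A \<subseteq> {x \<in> topspace X. g x < a}"
      proof
        fix x assume "x \<in> A"
        then have "g x \<le> g z" using \<open>\<forall>x\<in>A. g x \<le> g z\<close> by blast
        then show "x \<in> {x \<in> topspace X. g x < a}" using \<open>x \<in> A\<close> \<open>A \<subseteq> topspace X\<close> \<open>g z < a\<close> by auto
      qed
    next
      assume "A \<subseteq> {x \<in> topspace X. g x < a}"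
      then have "g z < a" using \<open>z\<in>A\<close> by blast
      then show "Sup (g ` A) < a" using \<open>Sup (g ` A) = g z\<close> by simp
    qed
  qed
  then show "openin (subtopology (vietoris X) H) {A\<in>H. Sup (g ` A) < a}"
    using open_plus[OF assms(1) o1(2)] by simp
qed

lemma cont_inf:
  assumes "H \<subseteq> hyp_K X" "continuous_map X euclideanreal g"
  shows "continuous_map (subtopology (vietoris X) H) euclideanreal (\<lambda>A. Inf (g ` A))"
  unfolding continuous_map_upper_lower_semicontinuous_lt topspace_vietoris_H[OF assms(1)]
proof (intro allI conjI)
  fix a :: real
  have o1: "openin X {x \<in> topspace X. g x > a}" "openin X {x \<in> topspace X. g x < a}"
    using assms(2) unfolding continuous_map_upper_lower_semicontinuous_lt by auto
  have "{A\<in>H. a < Inf (g ` A)} = {A\<in>H. A \<subseteq> {x \<in> topspace X. g x > a}}"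
  proof (intro Collect_cong conj_cong refl)
    fix A assume "A \<in> H"
    then have A: "compactin X A" "A \<noteq> {}" using assms(1) by (auto simp: hyp_K_def)
    then have "A \<subseteq> topspace X" by (simp add: compactin_subset_topspace)
    obtain z where "z\<in>A" "Inf (g ` A) = g z" "\<forall>x\<in>A. g z \<le> g x" using inf_attained[OF A assms(2)] by blast
    show "a < Inf (g ` A) \<longleftrightarrow> A \<subseteq> {x \<in> topspace X. g x > a}"
    proof
      assume "a < Inf (g ` A)" then have "a < g z" using \<open>Inf (g ` A) = g z\<close> by simp
      show "A \<subseteq> {x \<in> topspace X. g x > a}"
      proof
        fix x assume "x \<in> A"
        then have "g z \<le> g x" using \<open>\<forall>x\<in>A. g z \<le> g x\<close> by blast
        then show "x \<in> {x \<in> topspace X. g x > a}" using \<open>x \<in> A\<close> \<open>A \<subseteq> topspace X\<close> \<open>a < g z\<close> by auto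
      qed
    next
      assume "A \<subseteq> {x \<in> topspace X. g x > a}"
      then have "a < g z" using \<open>z\<in>A\<close> by blast
      then show "a < Inf (g ` A)" using \<open>Inf (g ` A) = g z\<close> by simp
    qed
  qed
  then show "openin (subtopology (vietoris X) H) {A\<in>H. a < Inf (g ` A)}"
    using open_plus[OF assms(1) o1(1)] by simp
  have "{A\<in>H. Inf (g ` A) < a} = {A\<in>H. A \<inter> {x \<in> topspace X. g x < a} \<noteq> {}}"
  proof (intro Collect_cong conj_cong refl)
    fix A assume "A \<in> H"
    then have A: "compactin X A" "A \<noteq> {}" using assms(1) by (auto simp: hyp_K_def)
    then have "A \<subseteq> topspace X" by (simp add: compactin_subset_topspace)
    obtain z where "z\<in>A" "Inf (g ` A) = g z" "\<forall>x\<in>A. g z \<le> g x" using inf_attained[OF A assms(2)] by blast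
    show "Inf (g ` A) < a \<longleftrightarrow> A \<inter> {x \<in> topspace X. g x < a} \<noteq> {}"
    proof
      assume "Inf (g ` A) < a" then have "g z < a" using \<open>Inf (g ` A) = g z\<close> by simp
      then have "z \<in> A \<inter> {x \<in> topspace X. g x < a}" using \<open>z\<in>A\<close> \<open>A \<subseteq> topspace X\<close> by auto
      then show "A \<inter> {x \<in> topspace X. g x < a} \<noteq> {}" by blast
    next
      assume "A \<inter> {x \<in> topspace X. g x < a} \<noteq> {}"
      then obtain x where "x \<in> A" "g x < a" by blast
      moreover have "g z \<le> g x" using \<open>\<forall>x\<in>A. g z \<le> g x\<close> \<open>x \<in> A\<close> by blast
      ultimately show "Inf (g ` A) < a" using \<open>Inf (g ` A) = g z\<close> by linarith
    qed
  qed
  then show "openin (subtopology (vietoris X) H) {A\<in>H. Inf (g ` A) < a}"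
    using open_minus[OF assms(1) o1(2)] by simp
qed

lemma tail_bound:
  fixes h :: "nat \<Rightarrow> real"
  assumes "\<And>n. 0 \<le> h n" "\<And>n. h n \<le> 1"
  shows "summable (\<lambda>n. (1/2)^n * h n)"
    and "\<bar>(\<Sum>n. (1/2)^n * h n) - (\<Sum>n<N. (1/2)^n * h n)\<bar> \<le> 2 * (1/2)^N"
proof -
  have geo: "summable (\<lambda>n. (1/2::real)^n)" by (rule summable_geometric) simp
  show sm: "summable (\<lambda>n. (1/2)^n * h n)"
    by (rule summable_comparison_test[OF _ geo]) (use assms in \<open>auto intro!: exI[of _ 0] mult_left_le\<close>)
  have eq: "(\<Sum>n. (1/2)^n * h n) = (\<Sum>n. (1/2)^(n+N) * h (n+N)) + (\<Sum>n<N. (1/2)^n * h n)"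
    using suminf_split_initial_segment[OF sm, of N] by simp
  have sm2: "summable (\<lambda>n. (1/2)^(n+N) * h (n+N))"
    using summable_ignore_initial_segment[OF sm, of N] by simp
  have geo2: "summable (\<lambda>n. (1/2::real)^N * (1/2)^n)" using geo by (rule summable_mult)
  have "(\<Sum>n. (1/2)^(n+N) * h (n+N)) \<le> (\<Sum>n. (1/2::real)^N * (1/2)^n)"
  proof (rule suminf_le[OF _ sm2 geo2])
    fix n
    have "(1/2::real)^(n+N) * h (n+N) \<le> (1/2)^(n+N) * 1"
      by (rule mult_left_mono) (use assms in auto)
    then show "(1/2::real)^(n+N) * h (n+N) \<le> (1/2)^N * (1/2)^n" by (simp add: power_add)
  qed
  also have "\<dots> = (1/2)^N * 2"
    using suminf_mult[OF geo, of "(1/2::real)^N"] suminf_geometric[of "1/2::real"] by simp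
  finally have le: "(\<Sum>n. (1/2)^(n+N) * h (n+N)) \<le> 2 * (1/2)^N" by simp
  have ge: "0 \<le> (\<Sum>n. (1/2)^(n+N) * h (n+N))"
    by (rule suminf_nonneg[OF sm2]) (use assms in auto)
  show "\<bar>(\<Sum>n. (1/2)^n * h n) - (\<Sum>n<N. (1/2)^n * h n)\<bar> \<le> 2 * (1/2)^N"
    using eq le ge by simp
qed

lemma nonP_fun:
  fixes X :: "'a topology"
  assumes "completely_regular_space X" "\<not> p_space X"
  obtains p g where "p \<in> topspace X" "continuous_map X euclideanreal g"
    "\<forall>x\<in>topspace X. 0 \<le> g x" "g p = 0" "p \<in> X closure_of {x\<in>topspace X. g x > 0}"
proof -
  obtain G p where G: "gdelta_in X G" "p \<in> G" "p \<notin> X interior_of G"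
    using assms(2) unfolding p_space_def by blast
  obtain C :: "nat \<Rightarrow> 'a set" where C: "\<And>n. openin X (C n)" "\<Inter>(range C) = G"
    using G(1) unfolding gdelta_in_descending by blast
  have pT: "p \<in> topspace X" using G gdelta_in_subset by blast
  have pC: "p \<in> C n" for n using C G by blast
  have ex0: "\<exists>f::'a\<Rightarrow>real. continuous_map X (top_of_set {0..1}) f \<and> f p = 0 \<and> f ` (topspace X - C n) \<subseteq> {1}" for n
  proof -
    have "closedin X (topspace X - C n)" by (simp add: closedin_diff C(1))
    moreover have "p \<in> topspace X - (topspace X - C n)" using pT pC by blast
    ultimately show ?thesis using assms(1) unfolding completely_regular_space_def by blast
  qed
  have "\<exists>F::nat\<Rightarrow>'a\<Rightarrow>real. \<forall>n. continuous_map X (top_of_set {0..1}) (F n) \<and> F n p = 0 \<and> F n ` (topspace X - C n) \<subseteq> {1}"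
    by (rule choice[OF allI[OF ex0]])
  then obtain f :: "nat \<Rightarrow> 'a \<Rightarrow> real" where f0: "\<forall>n. continuous_map X (top_of_set {0..1}) (f n) \<and> f n p = 0 \<and> f n ` (topspace X - C n) \<subseteq> {1}"
    by blast
  have f: "\<And>n. continuous_map X (top_of_set {0..1}) (f n)" "\<And>n. f n p = 0"
    "\<And>n. f n ` (topspace X - C n) \<subseteq> {1}" using f0 by auto
  have fc: "continuous_map X euclideanreal (f n)" for n
    using f(1)[of n] continuous_map_in_subtopology by blast
  have f01: "x \<in> topspace X \<Longrightarrow> 0 \<le> f n x \<and> f n x \<le> 1" for x n
    using f(1)[of n] unfolding continuous_map_in_subtopology by auto
  define g where "g x = (\<Sum>n. (1/2)^n * f n x)" for x
  have tb: "x \<in> topspace X \<Longrightarrow> summable (\<lambda>n. (1/2)^n * f n x)" for x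
    using tail_bound(1)[of "\<lambda>n. f n x"] f01 by blast
  have tb2: "x \<in> topspace X \<Longrightarrow> \<bar>g x - (\<Sum>n<N. (1/2)^n * f n x)\<bar> \<le> 2 * (1/2)^N" for x N
    using tail_bound(2)[of "\<lambda>n. f n x" N] f01 unfolding g_def by blast
  have gc: "continuous_map X euclideanreal g"
  proof -
    have "continuous_map X Met_TC.mtopology g"
    proof (rule Met_TC.continuous_map_uniform_limit[where F=sequentially and f="\<lambda>N x. \<Sum>n<N. (1/2)^n * f n x"])
      show "\<forall>\<^sub>F N in sequentially. continuous_map X Met_TC.mtopology (\<lambda>x. \<Sum>n<N. (1/2)^n * f n x)"
        by (intro always_eventually allI) (simp add: continuous_map_sum continuous_map_real_mult_left fc)
      fix e :: real assume "0 < e"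
      obtain N0 where N0: "(1/2::real)^N0 < e/2" using real_arch_pow_inv[of "e/2" "1/2"] \<open>0 < e\<close> by auto
      show "\<forall>\<^sub>F N in sequentially. \<forall>x\<in>topspace X. g x \<in> UNIV \<and> dist (\<Sum>n<N. (1/2)^n * f n x) (g x) < e"
      proof (rule eventually_sequentiallyI[of N0], intro ballI conjI UNIV_I)
        fix N x assume "N0 \<le> N" "x \<in> topspace X"
        have "(1/2::real)^N \<le> (1/2)^N0" using \<open>N0 \<le> N\<close> by (simp add: power_decreasing)
        moreover have "\<bar>g x - (\<Sum>n<N. (1/2)^n * f n x)\<bar> \<le> 2 * (1/2)^N"
          using tb2[OF \<open>x \<in> topspace X\<close>, of N] .
        ultimately have "\<bar>g x - (\<Sum>n<N. (1/2)^n * f n x)\<bar> < e" using N0 by linarith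
        then show "dist (\<Sum>n<N. (1/2)^n * f n x) (g x) < e"
          by (simp add: dist_real_def abs_minus_commute)
      qed
    qed simp
    then show ?thesis by simp
  qed
  have gnn: "\<forall>x\<in>topspace X. 0 \<le> g x"
    unfolding g_def using tb f01 by (auto intro!: suminf_nonneg)
  have gp: "g p = 0" unfolding g_def using f(2) by simp
  have gz: "x \<in> G" if "x \<in> topspace X" "g x = 0" for x
  proof -
    have "\<forall>n. (1/2)^n * f n x = 0"
      using suminf_eq_zero_iff[OF tb[OF that(1)]] that f01 unfolding g_def by auto
    then have "f n x = 0" for n by simp
    have "x \<in> C n" for n
    proof (rule ccontr)
      assume "x \<notin> C n"
      then have "f n x \<in> f n ` (topspace X - C n)" using that(1) by blast
      then have "f n x = 1" using f(3)[of n] by blast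
      then show False using \<open>f n x = 0\<close> by simp
    qed
    then have "x \<in> \<Inter>(range C)" by blast
    then show ?thesis using C(2) by simp
  qed
  have "p \<in> X closure_of {x\<in>topspace X. g x > 0}"
    unfolding in_closure_of
  proof (intro conjI allI impI pT)
    fix T assume T: "p \<in> T \<and> openin X T"
    show "\<exists>y. y \<in> {x \<in> topspace X. 0 < g x} \<and> y \<in> T"
    proof (rule ccontr)
      assume neg: "\<not> ?thesis"
      have "T \<subseteq> G"
      proof
        fix y assume "y \<in> T"
        then have y: "y \<in> topspace X" using T openin_subset by blast
        then have "\<not> 0 < g y" using neg \<open>y \<in> T\<close> by blast
        moreover have "0 \<le> g y" using gnn y by blast
        ultimately have "g y = 0" by linarith
        then show "y \<in> G" using gz y by blast
      qed
      then have "p \<in> X interior_of G" using T interior_of_maximal by blast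
      then show False using G(3) by blast
    qed
  qed
  then show ?thesis using that pT gc gnn gp by blast
qed


theorem proposition3p6:
  fixes X :: "'a topology" and H :: "'a set set"
  assumes "tychonoff_space X"
    and "hyp_F2 X \<subseteq> H" and "H \<subseteq> hyp_K X"
    and "F'_space (subtopology (vietoris X) H)"
  shows "p_space X"
proof (rule ccontr)
  assume nP: "\<not> p_space X"
  have crs: "completely_regular_space X" using assms(1) by (simp add: tychonoff_space_def)
  obtain p g where pT: "p \<in> topspace X" and gc: "continuous_map X euclideanreal g"
    and gnn: "\<forall>x\<in>topspace X. 0 \<le> g x" and gp: "g p = 0"
    and pcl: "p \<in> X closure_of {x\<in>topspace X. g x > 0}"
    using nonP_fun[OF crs nP] by blast
  define HS where "HS = subtopology (vietoris X) H"
  have tHS: "topspace HS = H" unfolding HS_def by (rule topspace_vietoris_H[OF assms(3)])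
  define mx where "mx A = Sup (g ` A)" for A
  define mn where "mn A = Inf (g ` A)" for A
  have mxc: "continuous_map HS euclideanreal mx"
    unfolding HS_def mx_def by (rule cont_sup[OF assms(3) gc])
  have mnc: "continuous_map HS euclideanreal mn"
    unfolding HS_def mn_def by (rule cont_inf[OF assms(3) gc])
  define u where "u A = max 0 (2 * mn A - mx A)" for A
  define v where "v A = max 0 (mx A - 2 * mn A)" for A
  have uc: "continuous_map HS euclideanreal u"
    unfolding u_def by (intro continuous_map_real_max continuous_map_diff continuous_map_real_mult_left mxc mnc continuous_map_const[THEN iffD2]) simp
  have vc: "continuous_map HS euclideanreal v"
    unfolding v_def by (intro continuous_map_real_max continuous_map_diff continuous_map_real_mult_left mxc mnc continuous_map_const[THEN iffD2]) simp
  define C where "C = topspace HS - {A \<in> topspace HS. u A = 0}"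
  define D where "D = topspace HS - {A \<in> topspace HS. v A = 0}"
  have cC: "cozero_set_in HS C" unfolding cozero_set_in_def C_def using uc by blast
  have cD: "cozero_set_in HS D" unfolding cozero_set_in_def D_def using vc by blast
  have disj: "C \<inter> D = {}"
  proof -
    have "u A = 0 \<or> v A = 0" for A unfolding u_def v_def by linarith
    then show ?thesis unfolding C_def D_def by blast
  qed
  have F': "(HS closure_of C) \<inter> (HS closure_of D) = {}"
    using assms(4) cC cD disj unfolding F'_space_def HS_def by blast
  define S where "S = {x\<in>topspace X. g x > 0}"
  have sing: "{x} \<in> H" if "x \<in> topspace X" for x
    using assms(2) that unfolding hyp_F2_def by auto
  have pair: "{p, x} \<in> H" if "x \<in> topspace X" for x
  proof -
    have "card {p, x} \<le> 2" by (simp add: card_insert_if)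
    then show ?thesis using assms(2) that pT unfolding hyp_F2_def by auto
  qed
  have sc: "continuous_map X HS (\<lambda>x. {x})"
    unfolding HS_def
  proof (rule cont_into_vietoris[OF assms(3)])
    show "\<And>y. y \<in> topspace X \<Longrightarrow> {y} \<in> H" by (rule sing)
    fix U assume U: "openin X U"
    have e1: "{y \<in> topspace X. {y} \<subseteq> U} = U" using openin_subset[OF U] by auto
    have e2: "{y \<in> topspace X. {y} \<inter> U \<noteq> {}} = U" using openin_subset[OF U] by auto
    show "openin X {y \<in> topspace X. {y} \<subseteq> U}" using e1 U by simp
    show "openin X {y \<in> topspace X. {y} \<inter> U \<noteq> {}}" using e2 U by simp
  qed
  have tc: "continuous_map X HS (\<lambda>x. {p, x})"
    unfolding HS_def
  proof (rule cont_into_vietoris[OF assms(3)])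
    show "\<And>y. y \<in> topspace X \<Longrightarrow> {p, y} \<in> H" by (rule pair)
    fix U assume U: "openin X U"
    show "openin X {y \<in> topspace X. {p, y} \<subseteq> U}"
    proof (cases "p \<in> U")
      case True
      then have "{y \<in> topspace X. {p, y} \<subseteq> U} = U" using openin_subset[OF U] by auto
      then show ?thesis using U by simp
    next
      case False
      then have "{y \<in> topspace X. {p, y} \<subseteq> U} = {}" by auto
      then show ?thesis by (metis openin_empty)
    qed
    show "openin X {y \<in> topspace X. {p, y} \<inter> U \<noteq> {}}"
    proof (cases "p \<in> U")
      case True
      then have "{y \<in> topspace X. {p, y} \<inter> U \<noteq> {}} = topspace X" by auto
      then show ?thesis by simp
    next
      case False
      then have "{y \<in> topspace X. {p, y} \<inter> U \<noteq> {}} = U" using openin_subset[OF U] by auto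
      then show ?thesis using U by simp
    qed
  qed
  have sS: "(\<lambda>x. {x}) ` S \<subseteq> C"
  proof
    fix A assume "A \<in> (\<lambda>x. {x}) ` S"
    then obtain x where x: "x \<in> topspace X" "g x > 0" and A: "A = {x}" unfolding S_def by blast
    have "mx A = g x" "mn A = g x" unfolding mx_def mn_def A by simp_all
    then have "u A = g x" unfolding u_def using x by simp
    then show "A \<in> C" unfolding C_def tHS using x sing A by auto
  qed
  have tS: "(\<lambda>x. {p, x}) ` S \<subseteq> D"
  proof
    fix A assume "A \<in> (\<lambda>x. {p, x}) ` S"
    then obtain x where x: "x \<in> topspace X" "g x > 0" and A: "A = {p, x}" unfolding S_def by blast
    have gA: "g ` A = {0, g x}" unfolding A using gp by simp
    have "mx A = g x" unfolding mx_def gA by (rule cSup_eq_maximum) (use x in auto)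
    moreover have "mn A = 0" unfolding mn_def gA by (rule cInf_eq_minimum) (use x in auto)
    ultimately have "v A = g x" unfolding v_def using x by simp
    then show "A \<in> D" unfolding D_def tHS using x pair A by auto
  qed
  have "{p} \<in> HS closure_of C"
  proof -
    have "{p} \<in> (\<lambda>x. {x}) ` (X closure_of S)" using pcl unfolding S_def by blast
    also have "\<dots> \<subseteq> HS closure_of ((\<lambda>x. {x}) ` S)" by (rule continuous_map_image_closure_subset[OF sc])
    also have "\<dots> \<subseteq> HS closure_of C" by (rule closure_of_mono[OF sS])
    finally show ?thesis .
  qed
  moreover have "{p} \<in> HS closure_of D"
  proof -
    have "{p} = {p, p}" by simp
    then have "{p} \<in> (\<lambda>x. {p, x}) ` (X closure_of S)" using pcl unfolding S_def by blast
    also have "\<dots> \<subseteq> HS closure_of ((\<lambda>x. {p, x}) ` S)" by (rule continuous_map_image_closure_subset[OF tc])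
    also have "\<dots> \<subseteq> HS closure_of D" by (rule closure_of_mono[OF tS])
    finally show ?thesis .
  qed
  ultimately show False using F' by blast
qed

end
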